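(* Let $H$ be a digraph (possibly with loops) and let $D$ be an $H$-colored tournament in which every directed $3$-cycle is an $H$-cycle. Then for every $k \geq 2$, $D$ has a $(k,H)$-kernel.
   Context: All digraphs are finite. A tournament is a digraph in which every two distinct vertices are joined by exactly one arc (no loops, no symmetric arcs). $D$ comes with a map $\rho: A(D)\to V(H)$. For a walk $W=(x_0,\ldots,x_n)$ in $D$, there is an obstruction on $x_i$ if $(\rho(x_{i-1},x_i),\rho(x_i,x_{i+1})) \notin A(H)$; for an open walk this is considered at internal vertices $x_i$, $1\le i\le n-1$, for a closed walk at all $i\in\{0,\ldots,n-1\}$ with indices modulo $n$. $O_H(W)$ is the set of indices with an obstruction; the $H$-length is $l_H(W)=|O_H(W)|+1$ for open $W$ and $|O_H(W)|$ for closed $W$. An $H$-cycle is a directed cycle with no obstructions. A $(k,H)$-kernel ($k\ge2$) is a set $S\subseteq V(D)$ such that for every two distinct $u,v\in S$ every directed $uv$-path in $D$ has $H$-length at least $k$, and for every $x\in V(D)\setminus S$ there is a directed path from $x$ to a vertex of $S$ of $H$-length at most $k-1$. *)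

theory Defs
  imports Main
begin

text \<open>D = (V, A); H = (VH, AH) (loops allowed in H). The colouring is
  rho :: 'a \<times> 'a \<Rightarrow> 'h, relevant on the arcs of D.\<close>

definition digraph :: "'a set \<Rightarrow> ('a \<times> 'a) set \<Rightarrow> bool" where
  "digraph V A \<longleftrightarrow> finite V \<and> A \<subseteq> V \<times> V"

definition tournament :: "'a set \<Rightarrow> ('a \<times> 'a) set \<Rightarrow> bool" where
  "tournament V A \<longleftrightarrow> digraph V A \<and> (\<forall>v. (v, v) \<notin> A) \<and>
     (\<forall>u\<in>V. \<forall>v\<in>V. u \<noteq> v \<longrightarrow> ((u, v) \<in> A \<longleftrightarrow> (v, u) \<notin> A))"

definition H_colouring :: "('a \<times> 'a) set \<Rightarrow> 'h set \<Rightarrow> ('a \<times> 'a \<Rightarrow> 'h) \<Rightarrow> bool" where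
  "H_colouring A VH rho \<longleftrightarrow> (\<forall>e\<in>A. rho e \<in> VH)"

definition dpath :: "'a set \<Rightarrow> ('a \<times> 'a) set \<Rightarrow> 'a list \<Rightarrow> bool" where
  "dpath V A xs \<longleftrightarrow> xs \<noteq> [] \<and> distinct xs \<and> set xs \<subseteq> V \<and>
     (\<forall>i. Suc i < length xs \<longrightarrow> (xs ! i, xs ! Suc i) \<in> A)"

definition obstructions_open :: "('h \<times> 'h) set \<Rightarrow> ('a \<times> 'a \<Rightarrow> 'h) \<Rightarrow> 'a list \<Rightarrow> nat set" where
  "obstructions_open AH rho xs = {i. 1 \<le> i \<and> Suc i < length xs \<and>
     (rho (xs ! (i - 1), xs ! i), rho (xs ! i, xs ! Suc i)) \<notin> AH}"

definition H_length_open :: "('h \<times> 'h) set \<Rightarrow> ('a \<times> 'a \<Rightarrow> 'h) \<Rightarrow> 'a list \<Rightarrow> nat" where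
  "H_length_open AH rho xs = card (obstructions_open AH rho xs) + 1"

definition three_cycles_are_H_cycles ::
  "'a set \<Rightarrow> ('a \<times> 'a) set \<Rightarrow> ('h \<times> 'h) set \<Rightarrow> ('a \<times> 'a \<Rightarrow> 'h) \<Rightarrow> bool" where
  "three_cycles_are_H_cycles V A AH rho \<longleftrightarrow>
     (\<forall>x\<in>V. \<forall>y\<in>V. \<forall>z\<in>V. x \<noteq> y \<and> y \<noteq> z \<and> x \<noteq> z \<and>
        (x, y) \<in> A \<and> (y, z) \<in> A \<and> (z, x) \<in> A \<longrightarrow>
        (rho (z, x), rho (x, y)) \<in> AH \<and> (rho (x, y), rho (y, z)) \<in> AH \<and>
        (rho (y, z), rho (z, x)) \<in> AH)"

definition kH_kernel ::
  "'a set \<Rightarrow> ('a \<times> 'a) set \<Rightarrow> ('h \<times> 'h) set \<Rightarrow> ('a \<times> 'a \<Rightarrow> 'h) \<Rightarrow> nat \<Rightarrow> 'a set \<Rightarrow> bool" where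
  "kH_kernel V A AH rho k S \<longleftrightarrow> S \<subseteq> V \<and>
     (\<forall>u\<in>S. \<forall>v\<in>S. u \<noteq> v \<longrightarrow>
        (\<forall>xs. dpath V A xs \<and> hd xs = u \<and> last xs = v \<longrightarrow> H_length_open AH rho xs \<ge> k)) \<and>
     (\<forall>x\<in>V - S. \<exists>xs. dpath V A xs \<and> hd xs = x \<and> last xs \<in> S \<and>
        H_length_open AH rho xs \<le> k - 1)"

end

theory Submission
  imports Defs
begin

definition Hp :: "'a set \<Rightarrow> ('a \<times> 'a) set \<Rightarrow> ('h \<times> 'h) set \<Rightarrow> ('a \<times> 'a \<Rightarrow> 'h) \<Rightarrow> 'a list \<Rightarrow> bool" where
  "Hp V A AH rho xs \<longleftrightarrow> dpath V A xs \<and> obstructions_open AH rho xs = {}"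

lemma obs_prefix:
  assumes "obstructions_open AH rho (xs @ ys) = {}"
  shows "obstructions_open AH rho xs = {}"
proof -
  { fix i assume i: "i \<in> obstructions_open AH rho xs"
    then have "i \<in> obstructions_open AH rho (xs @ ys)"
      unfolding obstructions_open_def by (auto simp: nth_append)
    with assms have False by blast }
  then show ?thesis by blast
qed

lemma dpath_prefix:
  assumes "dpath V A (xs @ ys)" "xs \<noteq> []"
  shows "dpath V A xs"
proof -
  have a: "(\<forall>i. Suc i < length (xs @ ys) \<longrightarrow> ((xs @ ys) ! i, (xs @ ys) ! Suc i) \<in> A)"
    and b: "distinct (xs @ ys)" "set (xs @ ys) \<subseteq> V"
    using assms(1) unfolding dpath_def by blast+
  have c: "((xs) ! i, (xs) ! Suc i) \<in> A" if "Suc i < length xs" for i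
  proof -
    have "((xs @ ys) ! i, (xs @ ys) ! Suc i) \<in> A" using a that by simp
    moreover have "(xs @ ys) ! i = xs ! i" "(xs @ ys) ! Suc i = xs ! Suc i"
      using that by (simp_all add: nth_append)
    ultimately show ?thesis by simp
  qed
  show ?thesis unfolding dpath_def using b c assms(2) by simp
qed

lemma Hp_prefix: "Hp V A AH rho (xs @ ys) \<Longrightarrow> xs \<noteq> [] \<Longrightarrow> Hp V A AH rho xs"
  unfolding Hp_def using obs_prefix dpath_prefix by blast

lemma dpath_snoc:
  assumes "dpath V A xs" "x \<in> V" "x \<notin> set xs" "(last xs, x) \<in> A"
  shows "dpath V A (xs @ [x])"
proof -
  have ne: "xs \<noteq> []" and a: "\<forall>i. Suc i < length xs \<longrightarrow> (xs ! i, xs ! Suc i) \<in> A"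
    and b: "distinct xs" "set xs \<subseteq> V"
    using assms(1) unfolding dpath_def by blast+
  have c: "((xs @ [x]) ! i, (xs @ [x]) ! Suc i) \<in> A" if i: "Suc i < length (xs @ [x])" for i
  proof (cases "Suc i < length xs")
    case True
    then show ?thesis using a by (simp add: nth_append)
  next
    case False
    then have "i = length xs - 1" using i by simp
    then have "(xs @ [x]) ! i = last xs" "(xs @ [x]) ! Suc i = x" using ne
      by (simp_all add: nth_append last_conv_nth)
    then show ?thesis using assms(4) by simp
  qed
  show ?thesis unfolding dpath_def using b c assms(2,3) by simp
qed

lemma obs_snoc:
  assumes "obstructions_open AH rho (xs @ [a, b]) \<noteq> {}" "obstructions_open AH rho (xs @ [a]) = {}"
    "xs \<noteq> [] \<Longrightarrow> (rho (last xs, a), rho (a, b)) \<in> AH"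
  shows False
proof -
  obtain i where i: "i \<in> obstructions_open AH rho (xs @ [a, b])" using assms(1) by blast
  show False
  proof (cases "i = length xs")
    case True
    then have "xs \<noteq> []" using i unfolding obstructions_open_def by auto
    then show ?thesis using i assms(3) True unfolding obstructions_open_def
      by (auto simp: nth_append last_conv_nth)
  next
    case False
    then have "i \<in> obstructions_open AH rho (xs @ [a])" using i unfolding obstructions_open_def
      by (auto simp: nth_append)
    then show ?thesis using assms(2) by auto
  qed
qed

lemma Hp_two: "a \<in> V \<Longrightarrow> b \<in> V \<Longrightarrow> a \<noteq> b \<Longrightarrow> (a, b) \<in> A \<Longrightarrow> Hp V A AH rho [a, b]"
  unfolding Hp_def dpath_def obstructions_open_def by auto

lemma key:
  assumes T: "tournament V A" and C: "three_cycles_are_H_cycles V A AH rho"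
  shows "Hp V A AH rho P \<Longrightarrow> P \<noteq> [] \<Longrightarrow> (last P, x) \<in> A \<Longrightarrow> x \<in> V \<Longrightarrow> x \<notin> set P \<Longrightarrow>
     \<exists>xs. Hp V A AH rho xs \<and> hd xs = hd P \<and> last xs = x"
proof (induction P rule: rev_induct)
  case Nil
  then show ?case by simp
next
  case (snoc v Q)
  have vV: "v \<in> V" using snoc.prems(1) unfolding Hp_def dpath_def by auto
  show ?case
  proof (cases "Q = []")
    case True
    then show ?thesis using snoc.prems vV Hp_two[of v V x A AH rho] by auto
  next
    case False
    then obtain Q' w where Q: "Q = Q' @ [w]" by (metis rev_exhaust)
    have HQ: "Hp V A AH rho Q" using Hp_prefix snoc.prems(1) False by blast
    have dp: "dpath V A (Q' @ [w, v])" using snoc.prems(1) Q unfolding Hp_def by simp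
    have wv: "(w, v) \<in> A" "w \<noteq> v" "w \<in> V"
      using dp unfolding dpath_def
      apply (auto)
      apply (drule spec[of _ "length Q'"]) apply (auto simp: nth_append)
      done
    have xw: "x \<noteq> w" "x \<noteq> v" using snoc.prems(5) Q by auto
    show ?thesis
    proof (cases "(w, x) \<in> A")
      case True
      have l: "(last Q, x) \<in> A" using True Q by simp
      have n: "x \<notin> set Q" using snoc.prems(5) by simp
      obtain xs where "Hp V A AH rho xs" "hd xs = hd Q" "last xs = x"
        using snoc.IH[OF HQ False l snoc.prems(4) n] by blast
      then show ?thesis using False by (intro exI[of _ xs]) simp
    next
      case nA: False
      have "(x, w) \<in> A" using T nA xw wv snoc.prems(4) unfolding tournament_def by blast
      then have cond: "(rho (w, v), rho (v, x)) \<in> AH"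
        using C wv xw vV snoc.prems(3,4) unfolding three_cycles_are_H_cycles_def by auto
      have d2: "dpath V A (Q @ [v] @ [x])"
        using dpath_snoc[of V A "Q @ [v]" x] snoc.prems unfolding Hp_def by simp
      have o1: "obstructions_open AH rho (Q' @ [w, v]) = {}" using snoc.prems(1) Q unfolding Hp_def by simp
      have "obstructions_open AH rho ((Q' @ [w]) @ [v, x]) = {}"
        using obs_snoc[of AH rho "Q' @ [w]" v x] o1 cond by auto
      then have "Hp V A AH rho (Q @ [v] @ [x])" using d2 Q unfolding Hp_def by simp
      then show ?thesis by (intro exI[of _ "Q @ [v] @ [x]"]) (auto simp: hd_append)
    qed
  qed
qed

lemma reach_trans:
  assumes T: "tournament V A" and C: "three_cycles_are_H_cycles V A AH rho"
    and P: "Hp V A AH rho P" "hd P = y" "last P = v" and vx: "(v, x) \<in> A" and xV: "x \<in> V"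
  shows "\<exists>xs. Hp V A AH rho xs \<and> hd xs = y \<and> last xs = x"
proof (cases "x \<in> set P")
  case True
  then obtain as bs where Pe: "P = as @ x # bs" by (meson split_list)
  have "Hp V A AH rho (as @ [x])" using Hp_prefix[of V A AH rho "as @ [x]" bs] P Pe by simp
  then show ?thesis using P Pe by (intro exI[of _ "as @ [x]"]) (cases as, auto)
next
  case False
  have "P \<noteq> []" using P unfolding Hp_def dpath_def by auto
  then show ?thesis using key[OF T C P(1)] P vx xV False by auto
qed

theorem corollary9:
  fixes V :: "'a set" and A :: "('a \<times> 'a) set"
    and VH :: "'h set" and AH :: "('h \<times> 'h) set"
    and rho :: "'a \<times> 'a \<Rightarrow> 'h" and k :: nat
  assumes "digraph VH AH"
    and "tournament V A"
    and "H_colouring A VH rho"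
    and "three_cycles_are_H_cycles V A AH rho"
    and "k \<ge> 2"
  shows "\<exists>S. kH_kernel V A AH rho k S"
proof (cases "V = {}")
  case True
  then show ?thesis unfolding kH_kernel_def by auto
next
  case False
  note T = assms(2) and C = assms(4)
  have fin: "finite V" using T unfolding tournament_def digraph_def by auto
  define R where "R v = {y \<in> V. \<exists>xs. Hp V A AH rho xs \<and> hd xs = y \<and> last xs = v}" for v
  have Rfin: "finite (R v)" for v using fin unfolding R_def by auto
  obtain v where vV: "v \<in> V" and vmax: "\<And>u. u \<in> V \<Longrightarrow> card (R u) \<le> card (R v)"
  proof -
    let ?M = "(\<lambda>u. card (R u)) ` V"
    have f: "finite ?M" "?M \<noteq> {}" using fin False by auto
    obtain v where "v \<in> V" "card (R v) = Max ?M" using Max_in[OF f] by auto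
    moreover have "\<And>u. u \<in> V \<Longrightarrow> card (R u) \<le> Max ?M" using Max_ge[OF f(1)] by auto
    ultimately show ?thesis using that by metis
  qed
  have all: "x \<in> R v" if xV: "x \<in> V" for x
  proof (rule ccontr)
    assume xn: "x \<notin> R v"
    have "Hp V A AH rho [v]" using vV unfolding Hp_def dpath_def obstructions_open_def by auto
    then have vR: "v \<in> R v" using vV unfolding R_def by force
    then have xv: "x \<noteq> v" using xn by auto
    have "(x, v) \<notin> A"
    proof
      assume "(x, v) \<in> A"
      then have "Hp V A AH rho [x, v]" using Hp_two xV vV xv by metis
      then show False using xn xV unfolding R_def by force
    qed
    then have va: "(v, x) \<in> A" using T xV vV xv unfolding tournament_def by blast
    have "R v \<subseteq> R x"
    proof
      fix y assume "y \<in> R v"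
      then obtain P where "y \<in> V" "Hp V A AH rho P" "hd P = y" "last P = v" unfolding R_def by auto
      then show "y \<in> R x" using reach_trans[OF T C _ _ _ va xV] unfolding R_def by blast
    qed
    moreover have "Hp V A AH rho [x]" using xV unfolding Hp_def dpath_def obstructions_open_def by auto
    then have "x \<in> R x" using xV unfolding R_def by force
    ultimately have "R v \<subset> R x" using xn by blast
    then have "card (R v) < card (R x)" using Rfin psubset_card_mono by blast
    with vmax[OF xV] show False by simp
  qed
  have "kH_kernel V A AH rho k {v}"
    unfolding kH_kernel_def
  proof (intro conjI ballI)
    show "{v} \<subseteq> V" using vV by auto
  next
    fix x assume "x \<in> V - {v}"
    then have "x \<in> R v" using all by auto
    then obtain xs where "Hp V A AH rho xs" "hd xs = x" "last xs = v" unfolding R_def by auto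
    then show "\<exists>xs. dpath V A xs \<and> hd xs = x \<and> last xs \<in> {v} \<and> H_length_open AH rho xs \<le> k - 1"
      using assms(5) unfolding Hp_def H_length_open_def by auto
  qed auto
  then show ?thesis by blast
qed

end
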